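(* Let $E$ be a metric space, $g\in\Sigma^E$, $t_0\in[0,\widehat T_g)$, and let $\tau$ be an $\mathcal F$-stopping time on $\Sigma^E$. Define $\tau_{g;t_0}$ on $\Sigma^E$ by $$\tau_{g;t_0}(f)=\begin{cases}(\tau(g\oplus_{t_0}f)-t_0)\vee 0,& \text{if } f(0)=g(t_0);\\ \widehat T_f,&\text{otherwise}.\end{cases}$$ Then $\tau_{g;t_0}$ is also an $\mathcal F$-stopping time.
   Context: $\Sigma^E$ is the set of continuous functions $f:[0,\widehat T_f)\to E$ with lifetime $\widehat T_f\in(0,\infty]$. For $t\ge0$ let $\Sigma^E_t=\{f:\widehat T_f>t\}$ and $\pi_t(f)=f(t)$ on $\Sigma^E_t$. Let $\mathcal F^*_t$ be the $\sigma$-algebra on $\Sigma^E$ generated by the sets $\Sigma^E_s$ and the maps $\pi_s$ (on $\Sigma^E_s$, with Borel sets of $E$) for $0\le s\le t$, and let $\mathcal F=(\mathcal F_t)_{t\ge0}$ be its right-continuation, $\mathcal F_t=\bigcap_{s>t}\mathcal F^*_s$. An $\mathcal F$-stopping time is a map $\tau:\Sigma^E\to[0,\infty]$ with $\{\tau\le t\}\in\mathcal F_t$ for all $t$. For $g\in\Sigma^E$, $t_0\in[0,\widehat T_g)$ and $f\in\Sigma^E$ with $f(0)=g(t_0)$, $g\oplus_{t_0}f$ is the function with lifetime $t_0+\widehat T_f$ equal to $g(t)$ for $0\le t<t_0$ and to $f(t-t_0)$ for $t_0\le t<t_0+\widehat T_f$. *)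

theory Defs
  imports "HOL-Analysis.Analysis"
begin

text \<open>A path with lifetime is a pair (f, T): f :: real => 'e, T :: ereal the lifetime.
  Outside its domain [0,T) the function is normalised to the constant undefined,
  so that each element of Sigma^E has a unique representative.\<close>

type_synonym 'e path = "(real \<Rightarrow> 'e) \<times> ereal"

definition dom_of :: "ereal \<Rightarrow> real set" where
  "dom_of T = {t. 0 \<le> t \<and> ereal t < T}"

definition Sigma_E :: "('e::metric_space) path set" where
  "Sigma_E = {(f, T). 0 < T \<and> continuous_on (dom_of T) f \<and> (\<forall>t. t \<notin> dom_of T \<longrightarrow> f t = undefined)}"

definition Sigma_t :: "real \<Rightarrow> ('e::metric_space) path set" where
  "Sigma_t t = {p \<in> Sigma_E. ereal t < snd p}"

definition F_star :: "real \<Rightarrow> ('e::metric_space) path set set" where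
  "F_star t = sigma_sets Sigma_E
     ({Sigma_t s | s. 0 \<le> s \<and> s \<le> t} \<union>
      {{p \<in> Sigma_t s. fst p s \<in> B} | s B. 0 \<le> s \<and> s \<le> t \<and> B \<in> sets borel})"

definition F_filt :: "real \<Rightarrow> ('e::metric_space) path set set" where
  "F_filt t = (\<Inter>s\<in>{t<..}. F_star s)"

definition stopping_time_E :: "(('e::metric_space) path \<Rightarrow> ereal) \<Rightarrow> bool" where
  "stopping_time_E \<tau> \<longleftrightarrow> (\<forall>p\<in>Sigma_E. 0 \<le> \<tau> p) \<and>
     (\<forall>t::real. 0 \<le> t \<longrightarrow> {p \<in> Sigma_E. \<tau> p \<le> ereal t} \<in> F_filt t)"

definition concat_path :: "'e path \<Rightarrow> real \<Rightarrow> 'e path \<Rightarrow> 'e path" where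
  "concat_path g t0 f =
     ((\<lambda>t. if 0 \<le> t \<and> t < t0 then fst g t
           else if t0 \<le> t \<and> ereal (t - t0) < snd f then fst f (t - t0)
           else undefined),
      ereal t0 + snd f)"

definition tau_shift :: "('e path \<Rightarrow> ereal) \<Rightarrow> 'e path \<Rightarrow> real \<Rightarrow> 'e path \<Rightarrow> ereal" where
  "tau_shift \<tau> g t0 f =
     (if fst f 0 = fst g t0 then max (\<tau> (concat_path g t0 f) - ereal t0) 0 else snd f)"

end

theory Submission imports Defs begin

lemma ereal_lt_shift: "ereal t < ereal t0 + T \<longleftrightarrow> ereal (t - t0) < T"
  by (cases T) auto

lemma concat_Sigma:
  assumes g: "g \<in> Sigma_E" and t0: "0 \<le> t0" "ereal t0 < snd g"
    and f: "f \<in> Sigma_E" and eq: "fst f 0 = fst g t0"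
  shows "concat_path g t0 f \<in> Sigma_E"
proof -
  obtain gf gT where gd: "g = (gf, gT)" by (cases g)
  obtain ff fT where fd: "f = (ff, fT)" by (cases f)
  have gc: "continuous_on (dom_of gT) gf" and gu: "\<And>t. t \<notin> dom_of gT \<Longrightarrow> gf t = undefined"
    and gp: "0 < gT" using g gd by (auto simp: Sigma_E_def)
  have fc: "continuous_on (dom_of fT) ff" and fu: "\<And>t. t \<notin> dom_of fT \<Longrightarrow> ff t = undefined"
    and fp: "0 < fT" using f fd by (auto simp: Sigma_E_def)
  have t0g: "ereal t0 < gT" using t0 gd by simp
  have eq': "ff 0 = gf t0" using eq gd fd by simp
  let ?S = "dom_of (ereal t0 + fT)"
  let ?h = "\<lambda>t. if 0 \<le> t \<and> t < t0 then gf t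
           else if t0 \<le> t \<and> ereal (t - t0) < fT then ff (t - t0) else undefined"
  have c1: "continuous_on {x \<in> ?S. x \<le> t0} gf"
    apply (rule continuous_on_subset[OF gc])
    using t0g by (auto simp: dom_of_def le_less_trans[of _ "ereal t0"])
  have c2: "continuous_on {x \<in> ?S. t0 \<le> x} (\<lambda>t. ff (t - t0))"
    apply (rule continuous_on_compose2[OF fc])
      apply (intro continuous_intros)
    by (auto simp: dom_of_def ereal_lt_shift)
  have c3: "continuous_on ?S (\<lambda>t. if t \<le> t0 then gf t else ff (t - t0))"
    apply (rule continuous_on_cases_le[OF c1 c2])
    using eq' by (auto intro: continuous_intros)
  have c4: "continuous_on ?S ?h"
    apply (rule continuous_on_eq[OF c3])
    using eq' by (auto simp: dom_of_def ereal_lt_shift)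
  have pos: "0 < ereal t0 + fT" using fp t0 by (cases fT) auto
  have und: "\<And>t. t \<notin> ?S \<Longrightarrow> ?h t = undefined"
  proof -
    fix t assume "t \<notin> ?S"
    hence "\<not> (0 \<le> t \<and> ereal (t - t0) < fT)" by (auto simp: dom_of_def ereal_lt_shift)
    moreover have "t < t0 \<Longrightarrow> ereal (t - t0) < fT" proof -
      assume "t < t0" hence "ereal (t - t0) < 0" by (simp add: zero_ereal_def)
      thus ?thesis using fp by (rule less_trans)
    qed
    ultimately show "?h t = undefined" using t0 by auto
  qed
  have "concat_path g t0 f = (?h, ereal t0 + fT)" unfolding concat_path_def gd fd fst_conv snd_conv by (rule refl)
  moreover have "(?h, ereal t0 + fT) \<in> Sigma_E"
    unfolding Sigma_E_def mem_Collect_eq prod.case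
    using c4 pos und by blast
  ultimately show ?thesis by simp
qed

lemma sigma_Int:
  assumes "a \<in> sigma_sets S M" "b \<in> sigma_sets S M" "M \<subseteq> Pow S"
  shows "a \<inter> b \<in> sigma_sets S M"
proof -
  have "a \<subseteq> S" "b \<subseteq> S" using assms sigma_sets_into_sp by blast+
  hence "a \<inter> b = S - ((S - a) \<union> (S - b))" by blast
  moreover have "S - ((S - a) \<union> (S - b)) \<in> sigma_sets S M"
    by (intro sigma_sets.Compl sigma_sets_Un assms)
  ultimately show ?thesis by simp
qed

lemma Sigma_t_sub: "Sigma_t s \<subseteq> Sigma_E" by (auto simp: Sigma_t_def)

lemma gens_Pow: "({Sigma_t s | s. 0 \<le> s \<and> s \<le> t} \<union>
      {{p \<in> Sigma_t s. fst p s \<in> B} | s B. 0 \<le> s \<and> s \<le> t \<and> B \<in> sets borel}) \<subseteq> Pow Sigma_E"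
  by (auto simp: Sigma_t_def)

lemma Sigma_t0: "Sigma_t 0 = Sigma_E"
  by (auto simp: Sigma_t_def Sigma_E_def zero_ereal_def[symmetric])

lemma gen1: "0 \<le> s' \<Longrightarrow> s' \<le> t \<Longrightarrow> Sigma_t s' \<in> F_star t"
  unfolding F_star_def by (rule sigma_sets.Basic) blast

lemma gen2: "0 \<le> s' \<Longrightarrow> s' \<le> t \<Longrightarrow> B \<in> sets borel \<Longrightarrow> {p \<in> Sigma_t s'. fst p s' \<in> B} \<in> F_star t"
  unfolding F_star_def by (rule sigma_sets.Basic) blast

lemma F_Int: "a \<in> F_star t \<Longrightarrow> b \<in> F_star t \<Longrightarrow> a \<inter> b \<in> F_star t"
  unfolding F_star_def by (rule sigma_Int[OF _ _ gens_Pow])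

lemma A_in: "0 \<le> s \<Longrightarrow> {f \<in> Sigma_E. fst f 0 = (c::'e::metric_space)} \<in> F_star s"
proof -
  assume "0 \<le> s"
  have "{f \<in> Sigma_E. fst f 0 = c} = {p \<in> Sigma_t 0. fst p 0 \<in> {c}}"
    using Sigma_t0 by auto
  thus ?thesis using gen2[of 0 s "{c}"] \<open>0 \<le> s\<close> by simp
qed

lemma snd_concat: "snd (concat_path g t0 f) = ereal t0 + snd f"
  by (simp add: concat_path_def)

lemma fst_concat: "fst (concat_path g t0 f) x = (if 0 \<le> x \<and> x < t0 then fst g x
           else if t0 \<le> x \<and> ereal (x - t0) < snd f then fst f (x - t0) else undefined)"
  by (simp add: concat_path_def)

lemma preimage:
  assumes g: "g \<in> Sigma_E" and t0: "0 \<le> t0" "ereal t0 < snd g" and s: "0 \<le> s"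
    and X: "X \<in> F_star (s + t0)"
  shows "{f \<in> Sigma_E. fst f 0 = fst g t0 \<and> concat_path g t0 f \<in> X} \<in> F_star s"
proof -
  let ?A = "{f \<in> Sigma_E. fst f 0 = fst g t0}"
  let ?P = "\<lambda>X. {f \<in> Sigma_E. fst f 0 = fst g t0 \<and> concat_path g t0 f \<in> X}"
  have AF: "?A \<in> F_star s" using A_in[OF s] .
  have inS: "\<And>f. f \<in> ?A \<Longrightarrow> concat_path g t0 f \<in> Sigma_E"
    using concat_Sigma[OF g t0] by blast
  have pos: "\<And>f. f \<in> Sigma_E \<Longrightarrow> 0 < snd f" by (auto simp: Sigma_E_def)
  have lt: "\<And>f s'. f \<in> Sigma_E \<Longrightarrow> s' < t0 \<Longrightarrow> ereal s' < ereal t0 + snd f"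
  proof -
    fix f s' assume "f \<in> Sigma_E" "s' < t0"
    hence "ereal (s' - t0) < 0" by (simp add: zero_ereal_def)
    moreover have "0 < snd f" using pos \<open>f \<in> Sigma_E\<close> by blast
    ultimately show "ereal s' < ereal t0 + snd f" unfolding ereal_lt_shift by (rule less_trans)
  qed
  from X show ?thesis unfolding F_star_def[of "s + t0"]
  proof (induction rule: sigma_sets.induct)
    case (Basic a)
    then consider (S) s' where "a = Sigma_t s'" "0 \<le> s'" "s' \<le> s + t0"
      | (B) s' B where "a = {p \<in> Sigma_t s'. fst p s' \<in> B}" "0 \<le> s'" "s' \<le> s + t0" "B \<in> sets borel"
      by blast
    then show ?case
    proof cases
      case S
      show ?thesis
      proof (cases "s' < t0")
        case True
        have "?P a = ?A" using S True inS lt by (auto simp: Sigma_t_def snd_concat)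
        thus ?thesis using AF by simp
      next
        case False
        have "?P a = ?A \<inter> Sigma_t (s' - t0)" using S False inS
          by (auto simp: Sigma_t_def snd_concat ereal_lt_shift)
        moreover have "Sigma_t (s' - t0) \<in> F_star s" using S False by (intro gen1) auto
        ultimately show ?thesis using AF F_Int by simp
      qed
    next
      case B
      show ?thesis
      proof (cases "s' < t0")
        case True
        have "?P a = (if fst g s' \<in> B then ?A else {})" using B True inS lt
          by (auto simp: Sigma_t_def snd_concat fst_concat)
        thus ?thesis using AF by (simp add: F_star_def sigma_sets.Empty)
      next
        case False
        have "?P a = ?A \<inter> {p \<in> Sigma_t (s' - t0). fst p (s' - t0) \<in> B}" using B False inS
          by (auto simp: Sigma_t_def snd_concat fst_concat ereal_lt_shift)
        moreover have "{p \<in> Sigma_t (s' - t0). fst p (s' - t0) \<in> B} \<in> F_star s"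
          using B False by (intro gen2) auto
        ultimately show ?thesis using AF F_Int by simp
      qed
    qed
  next
    case Empty
    show ?case by (simp add: F_star_def sigma_sets.Empty)
  next
    case (Compl a)
    have "?P (Sigma_E - a) = ?A \<inter> (Sigma_E - ?P a)" using inS by auto
    moreover have "Sigma_E - ?P a \<in> F_star s" using Compl.IH
      unfolding F_star_def by (rule sigma_sets.Compl)
    ultimately show ?case using AF F_Int by simp
  next
    case (Union a)
    have "?P (\<Union> (range a)) = (\<Union>i. ?P (a i))" by auto
    moreover have "(\<Union>i. ?P (a i)) \<in> F_star s" using Union.IH
      unfolding F_star_def by (rule sigma_sets.Union)
    ultimately show ?case by simp
  qed
qed

lemma ereal_shift_le2: "x - ereal t0 \<le> ereal t \<longleftrightarrow> x \<le> ereal (t + t0)"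
  by (cases x) auto

lemma ereal_shift_le:
  assumes "0 \<le> t" shows "max (x - ereal t0) 0 \<le> ereal t \<longleftrightarrow> x \<le> ereal (t + t0)"
  using assms by (cases x) auto

theorem lemma2p10:
  fixes g :: "('e::metric_space) path" and t0 :: real and \<tau> :: "'e path \<Rightarrow> ereal"
  assumes "g \<in> Sigma_E" and "0 \<le> t0" and "ereal t0 < snd g"
    and "stopping_time_E \<tau>"
  shows "stopping_time_E (tau_shift \<tau> g t0)"
  unfolding stopping_time_E_def
proof (intro conjI ballI allI impI)
  fix p :: "'e path" assume "p \<in> Sigma_E"
  then show "0 \<le> tau_shift \<tau> g t0 p"
    by (auto simp: tau_shift_def Sigma_E_def)
next
  fix t :: real assume t: "0 \<le> t"
  let ?A = "{f \<in> Sigma_E. fst f 0 = fst g t0}"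
  let ?Y = "{q \<in> Sigma_E. \<tau> q \<le> ereal (t + t0)}"
  let ?P = "{f \<in> Sigma_E. fst f 0 = fst g t0 \<and> concat_path g t0 f \<in> ?Y}"
  let ?C = "(Sigma_E - Sigma_t t) \<inter> (Sigma_E - ?A)"
  have inS: "\<And>f. f \<in> ?A \<Longrightarrow> concat_path g t0 f \<in> Sigma_E"
    using concat_Sigma[OF assms(1-3)] by blast
  have eq: "{p \<in> Sigma_E. tau_shift \<tau> g t0 p \<le> ereal t} = ?P \<union> ?C"
    using inS t by (auto simp: tau_shift_def ereal_shift_le ereal_shift_le2 Sigma_t_def not_less)
  have Yf: "?Y \<in> F_filt (t + t0)" using assms(4) t assms(2)
    unfolding stopping_time_E_def by simp
  show "{p \<in> Sigma_E. tau_shift \<tau> g t0 p \<le> ereal t} \<in> F_filt t"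
    unfolding F_filt_def
  proof (rule InterI, clarsimp)
    fix s assume ts: "t < s"
    have "?Y \<in> F_star (s + t0)" using Yf ts unfolding F_filt_def by auto
    moreover have s0: "0 \<le> s" using ts t by simp
    ultimately have P: "?P \<in> F_star s" using preimage[OF assms(1-3)] by blast
    have "Sigma_t t \<in> F_star s" using t ts by (intro gen1) auto
    hence c1: "Sigma_E - Sigma_t t \<in> F_star s" unfolding F_star_def by (rule sigma_sets.Compl)
    have "?A \<in> F_star s" using A_in[OF s0] .
    hence c2: "Sigma_E - ?A \<in> F_star s" unfolding F_star_def by (rule sigma_sets.Compl)
    have "?C \<in> F_star s" using F_Int[OF c1 c2] .
    with P have "?P \<union> ?C \<in> F_star s" unfolding F_star_def by (rule sigma_sets_Un)
    thus "{p \<in> Sigma_E. tau_shift \<tau> g t0 p \<le> ereal t} \<in> F_star s" using eq by simp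
  qed
qed

end
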